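(* Consider an arbitrary finite configuration of cities in general position in the $L\times L$ square, and let $\mathcal{G}_L$ be the network defined in the context. Suppose $\mathcal{G}_L$ is not connected. Then for any city $v_0$ there exist $m\ge0$ and distinct cities $v_0,v_1,\dots,v_m$ such that (i) $d(v_0,v_1)>d(v_1,v_2)>\dots>d(v_{m-1},v_m)$; (ii) if $m=0$ then every city within distance $\Delta(v_0)$ of $v_0$ is in the same component of $\mathcal{G}_L$ as $v_0$; (iii) if $m\ge1$ then $\Delta(v_m)<d(v_0,v_1)$.
   Context: The relative neighborhood graph (RNG) on a set of cities in $\mathbb{R}^2$ joins $x,y$ iff the lune $A_{x,y}$ (intersection of the discs of radius $d(x,y)$ centred at $x$ and at $y$, $d$ Euclidean distance) contains no other city. $\mathcal{G}_L$ is the graph on the cities in the $L\times L$ square whose edges are the pairs of these cities that are edges of the RNG for this configuration together with every locally finite configuration of cities outside the square. Components are connected components of $\mathcal{G}_L$. $\Delta(v)$ is the Euclidean distance from $v$ to the boundary of the $L\times L$ square. *)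

theory Defs
  imports "HOL-Analysis.Analysis"
begin

type_synonym point = "real \<times> real"

definition square :: "real \<Rightarrow> point set" where
  "square L = cbox (0, 0) (L, L)"

definition Delta :: "real \<Rightarrow> point \<Rightarrow> real" where
  "Delta L v = infdist v (frontier (square L))"

definition lune :: "point \<Rightarrow> point \<Rightarrow> point set" where
  "lune x y = cball x (dist x y) \<inter> cball y (dist x y)"

definition rng_edge :: "point set \<Rightarrow> point \<Rightarrow> point \<Rightarrow> bool" where
  "rng_edge T x y \<longleftrightarrow> x \<in> T \<and> y \<in> T \<and> x \<noteq> y \<and> (\<forall>z \<in> T - {x, y}. z \<notin> lune x y)"

definition locally_finite_config :: "point set \<Rightarrow> bool" where
  "locally_finite_config C \<longleftrightarrow> (\<forall>B. bounded B \<longrightarrow> finite (C \<inter> B))"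

definition GL_edge :: "real \<Rightarrow> point set \<Rightarrow> point \<Rightarrow> point \<Rightarrow> bool" where
  "GL_edge L S x y \<longleftrightarrow> x \<in> S \<and> y \<in> S \<and>
     (\<forall>C. locally_finite_config C \<and> C \<inter> square L = {} \<longrightarrow> rng_edge (S \<union> C) x y)"

definition same_component :: "real \<Rightarrow> point set \<Rightarrow> point \<Rightarrow> point \<Rightarrow> bool" where
  "same_component L S x y \<longleftrightarrow> x \<in> S \<and> y \<in> S \<and> (GL_edge L S)\<^sup>*\<^sup>* x y"

definition GL_connected :: "real \<Rightarrow> point set \<Rightarrow> bool" where
  "GL_connected L S \<longleftrightarrow> (\<forall>x \<in> S. \<forall>y \<in> S. same_component L S x y)"

definition general_position :: "point set \<Rightarrow> bool" where
  "general_position S \<longleftrightarrow>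
     (\<forall>a \<in> S. \<forall>b \<in> S. \<forall>c \<in> S. \<forall>d \<in> S. a \<noteq> b \<longrightarrow> c \<noteq> d \<longrightarrow>
        dist a b = dist c d \<longrightarrow> {a, b} = {c, d})"

end

theory Submission
  imports Defs
begin

lemma geo:
  assumes b: "b \<in> square L" and p: "p \<in> lune a b" and np: "p \<notin> square L"
  shows "Delta L b < dist a b"
proof -
  have d: "dist b p \<le> dist a b" using p by (auto simp: lune_def)
  have cl: "closed (square L)" unfolding square_def by (rule closed_cbox)
  have "closed_segment b p \<inter> frontier (square L) \<noteq> {}"
    by (rule connected_Int_frontier) (use b np in auto)
  then obtain r where r: "r \<in> closed_segment b p" "r \<in> frontier (square L)" by blast
  have "r \<in> square L" using r(2) frontier_subset_closed[OF cl] by blast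
  hence rp: "r \<noteq> p" using np by blast
  obtain u where u: "r = (1 - u) *\<^sub>R b + u *\<^sub>R p" "0 \<le> u" "u \<le> 1"
    using r(1) by (auto simp: closed_segment_def)
  have u1: "u < 1" using u rp by (cases "u = 1") auto
  have "b - r = u *\<^sub>R (b - p)" using u(1) by (simp add: algebra_simps)
  hence "dist b r = u * dist b p" using u(2) by (simp add: dist_norm)
  moreover have "dist b p > 0" using b np by auto
  ultimately have "dist b r < dist b p" using u1 by simp
  moreover have "Delta L b \<le> dist b r" unfolding Delta_def by (rule infdist_le[OF r(2)])
  ultimately show ?thesis using d by linarith
qed

lemma GL_sym: "GL_edge L S x y \<Longrightarrow> GL_edge L S y x"
  unfolding GL_edge_def rng_edge_def lune_def by (auto simp: dist_commute)

lemma sc_refl: "x \<in> S \<Longrightarrow> same_component L S x x"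
  unfolding same_component_def by auto

lemma rt_sym: "(GL_edge L S)\<^sup>*\<^sup>* x y \<Longrightarrow> (GL_edge L S)\<^sup>*\<^sup>* y x"
proof (induction rule: rtranclp.induct)
  case (rtrancl_refl a) then show ?case by simp
next
  case (rtrancl_into_rtrancl a b c)
  then show ?case by (metis GL_sym converse_rtranclp_into_rtranclp)
qed

lemma sc_sym: "same_component L S x y \<Longrightarrow> same_component L S y x"
  unfolding same_component_def using rt_sym by blast

lemma sc_trans: "same_component L S x y \<Longrightarrow> same_component L S y z \<Longrightarrow> same_component L S x z"
  unfolding same_component_def by (meson rtranclp_trans)

lemma edge_sc: "GL_edge L S x y \<Longrightarrow> same_component L S x y"
  unfolding same_component_def by (auto simp: GL_edge_def)

lemma edge_intro:
  assumes "x \<in> S" "y \<in> S" "x \<noteq> y" "lune x y \<subseteq> square L"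
    "\<forall>z\<in>S - {x,y}. z \<notin> lune x y"
  shows "GL_edge L S x y"
  unfolding GL_edge_def rng_edge_def
proof (intro conjI allI impI ballI assms(1,2,3))
  fix C z assume C: "locally_finite_config C \<and> C \<inter> square L = {}" and z: "z \<in> S \<union> C - {x, y}"
  show "z \<notin> lune x y"
  proof (cases "z \<in> S")
    case True then show ?thesis using z assms(5) by auto
  next
    case False then have "z \<notin> square L" using z C by auto
    then show ?thesis using assms(4) by auto
  qed
qed (use assms in auto)

lemma gp_eq: "general_position S \<Longrightarrow> a \<in> S \<Longrightarrow> b \<in> S \<Longrightarrow> c \<in> S \<Longrightarrow> d \<in> S \<Longrightarrow>
  a \<noteq> b \<Longrightarrow> c \<noteq> d \<Longrightarrow> dist a b = dist c d \<Longrightarrow> {a,b} = {c,d}"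
  unfolding general_position_def by metis

theorem lemma4:
  fixes L :: real and S :: "point set" and v0 :: point
  assumes "L > 0"
    and "finite S" and "S \<subseteq> square L"
    and "general_position S"
    and "\<not> GL_connected L S"
    and "v0 \<in> S"
  shows "\<exists>(m::nat) (v::nat \<Rightarrow> point).
           v 0 = v0 \<and> (\<forall>i \<le> m. v i \<in> S) \<and> inj_on v {0..m} \<and>
           (\<forall>i. Suc i < m \<longrightarrow> dist (v i) (v (Suc i)) > dist (v (Suc i)) (v (Suc (Suc i)))) \<and>
           (m = 0 \<longrightarrow> (\<forall>w \<in> S. dist v0 w \<le> Delta L v0 \<longrightarrow> same_component L S v0 w)) \<and>
           (m \<ge> 1 \<longrightarrow> Delta L (v m) < dist (v 0) (v 1))"
proof -
  note fin = assms(2) and sub = assms(3) and gp = assms(4)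
  let ?sc = "same_component L S"
  have ex: "\<exists>y. y \<in> S \<and> \<not> ?sc a y \<and> (\<forall>y'\<in>S. \<not> ?sc a y' \<longrightarrow> dist a y \<le> dist a y')"
    if a: "a \<in> S" for a
  proof -
    define N where "N = {y\<in>S. \<not> ?sc a y}"
    obtain x y where xy: "x \<in> S" "y \<in> S" "\<not> ?sc x y"
      using assms(5) unfolding GL_connected_def by blast
    have "N \<noteq> {}"
    proof
      assume "N = {}"
      hence "?sc a x" "?sc a y" using xy unfolding N_def by blast+
      thus False using xy(3) sc_sym sc_trans by metis
    qed
    moreover have "finite N" using fin by (simp add: N_def)
    ultimately have "Min (dist a ` N) \<in> dist a ` N" by simp
    then obtain y where y: "y \<in> N" "dist a y = Min (dist a ` N)" by auto
    have mn: "dist a y \<le> dist a y'" if "y' \<in> N" for y' using y(2) \<open>finite N\<close> that by simp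
    show ?thesis
    proof (intro exI[of _ y] conjI ballI impI)
      show "y \<in> S" "\<not> ?sc a y" using y(1) unfolding N_def by auto
      fix y' assume "y' \<in> S" "\<not> ?sc a y'"
      then show "dist a y \<le> dist a y'" using mn unfolding N_def by blast
    qed
  qed
  define f where "f a = (SOME y. y \<in> S \<and> \<not> ?sc a y \<and> (\<forall>y'\<in>S. \<not> ?sc a y' \<longrightarrow> dist a y \<le> dist a y'))" for a
  have fprop: "f a \<in> S \<and> \<not> ?sc a (f a) \<and> (\<forall>y'\<in>S. \<not> ?sc a y' \<longrightarrow> dist a (f a) \<le> dist a y')"
    if "a \<in> S" for a
    unfolding f_def by (rule someI_ex[OF ex[OF that]])
  define v where "v i = (f ^^ i) v0" for i
  have vS: "v i \<in> S" for i
    by (induction i) (auto simp: v_def assms(6) fprop)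
  have vSuc: "v (Suc i) = f (v i)" for i by (simp add: v_def)
  define n where "n i = dist (v i) (f (v i))" for i
  have step: "n (Suc i) < n i" if P: "lune (v i) (v (Suc i)) \<subseteq> square L" for i
  proof -
    define a where "a = v i"
    define b where "b = v (Suc i)"
    have aS: "a \<in> S" and bS: "b \<in> S" using vS by (auto simp: a_def b_def)
    have bf: "b = f a" by (simp add: a_def b_def vSuc)
    have nab: "\<not> ?sc a b" using fprop[OF aS] bf by simp
    have ab: "a \<noteq> b" using nab sc_refl aS by metis
    have "\<not> GL_edge L S a b" using nab edge_sc by metis
    moreover have "lune a b \<subseteq> square L" using P a_def b_def by simp
    ultimately have "\<not> (\<forall>z\<in>S - {a,b}. z \<notin> lune a b)" using edge_intro[OF aS bS ab] by auto
    then obtain z where z: "z \<in> S - {a,b}" "z \<in> lune a b" by auto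
    have z1: "dist a z \<le> dist a b" "dist b z \<le> dist a b" using z(2)
      by (auto simp: lune_def dist_commute)
    have "dist a z \<noteq> dist a b"
    proof
      assume "dist a z = dist a b"
      hence "{a,z} = {a,b}" using gp_eq[OF gp] aS bS z(1) ab by blast
      thus False using z(1) by (auto simp: doubleton_eq_iff)
    qed
    hence az: "dist a z < dist a b" using z1 by linarith
    have "dist b z \<noteq> dist a b"
    proof
      assume "dist b z = dist a b"
      hence "{b,z} = {a,b}" using gp_eq[OF gp] aS bS z(1) ab by blast
      thus False using z(1) ab by (auto simp: doubleton_eq_iff)
    qed
    hence bz: "dist b z < dist a b" using z1 by linarith
    have "?sc a z"
    proof (rule ccontr)
      assume "\<not> ?sc a z"
      hence "dist a b \<le> dist a z" using fprop[OF aS] bf z(1) by auto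
      thus False using az by linarith
    qed
    hence "\<not> ?sc b z" using nab sc_sym sc_trans by metis
    hence "dist b (f b) \<le> dist b z" using fprop[OF bS] z(1) by auto
    thus ?thesis unfolding n_def using bz bf a_def b_def by simp
  qed
  let ?P = "\<lambda>i. \<not> lune (v i) (v (Suc i)) \<subseteq> square L"
  have exP: "\<exists>i. ?P i"
  proof (rule ccontr)
    assume "\<not> (\<exists>i. ?P i)"
    hence dec: "n (Suc i) < n i" for i using step by blast
    have lt: "i < j \<Longrightarrow> n j < n i" for i j
      using lift_Suc_mono_less[of "\<lambda>i. - n i" i j] dec by force
    have "inj v"
    proof (rule injI)
      fix i j assume "v i = v j"
      hence "n i = n j" by (simp add: n_def)
      thus "i = j" using lt by (metis less_irrefl nat_neq_iff)
    qed
    moreover have "finite (range v)" using vS fin by (meson finite_subset image_subsetI)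
    ultimately show False using finite_imageD by fastforce
  qed
  define i0 where "i0 = (LEAST i. ?P i)"
  have Pi0: "?P i0" unfolding i0_def by (rule LeastI_ex[OF exP])
  have nPi: "i < i0 \<Longrightarrow> \<not> ?P i" for i unfolding i0_def by (rule not_less_Least)
  have dec2: "j \<le> i0 \<Longrightarrow> i < j \<Longrightarrow> n j < n i" for i j
  proof (induction j)
    case 0 then show ?case by simp
  next
    case (Suc j)
    have "n (Suc j) < n j" using step nPi Suc.prems by auto
    then show ?case using Suc by (cases "i = j") auto
  qed
  define m where "m = Suc i0"
  have neq: "v i \<noteq> v j" if ij: "i < j" "j \<le> m" for i j
  proof (cases "j \<le> i0")
    case True
    show ?thesis
    proof
      assume "v i = v j"
      hence "n i = n j" by (simp add: n_def)
      thus False using dec2[OF True ij(1)] by simp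
    qed
  next
    case False
    hence jm: "j = m" using ij m_def by simp
    show ?thesis
    proof (cases "i = i0")
      case True
      have "\<not> ?sc (v i0) (v m)" using fprop[OF vS[of i0]] by (simp add: m_def vSuc)
      thus ?thesis using True jm sc_refl vS by metis
    next
      case False
      hence ii0: "i < i0" using ij jm m_def by simp
      show ?thesis
      proof
        assume eq: "v i = v j"
        have "\<not> ?sc (v i0) (v m)" using fprop[OF vS[of i0]] by (simp add: m_def vSuc)
        hence "\<not> ?sc (v i) (v i0)" using eq jm sc_sym by metis
        hence "n i \<le> dist (v i) (v i0)" using fprop[OF vS[of i]] vS unfolding n_def by blast
        also have "\<dots> = n i0" using eq jm unfolding n_def m_def by (simp add: vSuc dist_commute)
        finally show False using dec2[OF le_refl ii0] by simp
      qed
    qed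
  qed
  have inj: "inj_on v {0..m}"
  proof (rule inj_onI)
    fix i j assume "i \<in> {0..m}" "j \<in> {0..m}" "v i = v j"
    thus "i = j" using neq by (metis atLeastAtMost_iff linorder_neqE_nat)
  qed
  have decr: "\<forall>i. Suc i < m \<longrightarrow> dist (v i) (v (Suc i)) > dist (v (Suc i)) (v (Suc (Suc i)))"
  proof (intro allI impI)
    fix i assume "Suc i < m"
    hence "i < i0" by (simp add: m_def)
    hence "n (Suc i) < n i" using step nPi by blast
    thus "dist (v i) (v (Suc i)) > dist (v (Suc i)) (v (Suc (Suc i)))"
      unfolding n_def by (simp add: vSuc)
  qed
  obtain p where p: "p \<in> lune (v i0) (v m)" "p \<notin> square L" using Pi0 m_def by blast
  have "Delta L (v m) < dist (v i0) (v m)" using geo[OF _ p] vS sub by blast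
  also have "\<dots> = n i0" by (simp add: n_def m_def vSuc)
  also have "\<dots> \<le> n 0" using dec2[of i0 0] by (cases "i0 = 0") auto
  also have "\<dots> = dist (v 0) (v 1)" by (simp add: n_def vSuc[of 0, symmetric])
  finally have iii: "Delta L (v m) < dist (v 0) (v 1)" .
  show ?thesis
    apply (rule exI[of _ m], rule exI[of _ v])
    using inj decr iii vS by (simp add: v_def m_def)
qed

end
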